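(* For every integer $n \geq 3$ there exists a cyclic $n$-dimensional unique sink orientation $\psi$ which is not $i$-nice for any $i < n$.
   Context: Let $Q^n = 2^{[n]}$ be the vertex set of the $n$-cube, with $u,v$ adjacent iff $|u\oplus v|=1$; faces are $F_{J,v}=\{u : v\oplus u\subseteq J\}$ for $J\subseteq[n]$. A unique sink orientation (USO) is an orientation of the cube's edges such that every nonempty face has a unique sink (vertex with no outgoing edges within the face); it is cyclic if it contains a directed cycle. The outmap $s_\psi(v)$ is the set of coordinates $j$ such that the edge $\{v,v\oplus\{j\}\}$ is directed away from $v$; the global sink is the vertex $t$ with $s_\psi(t)=\emptyset$. Let $d(v,u)$ be the length of a shortest directed path from $v$ to $u$ ($\infty$ if none). The reachmap is $r_\psi(v)=s_\psi(v)\cup\{j : \exists u \text{ reachable from } v \text{ by a directed path with } j\in s_\psi(u)\}$. A vertex $v$ is $i$-covered by $u$ if $d(v,u)\le i$ and $r_\psi(u)\subsetneq r_\psi(v)$; $\psi$ is $i$-nice if every vertex other than the global sink is $i$-covered by some vertex. *)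

theory Defs
  imports Main "HOL-Library.Extended_Nat"
begin

definition symdiff :: "nat set \<Rightarrow> nat set \<Rightarrow> nat set" where
  "symdiff u v = (u - v) \<union> (v - u)"

definition cube :: "nat \<Rightarrow> nat set set" where
  "cube n = Pow {..<n}"

definition adjacent :: "nat \<Rightarrow> nat set \<Rightarrow> nat set \<Rightarrow> bool" where
  "adjacent n u v \<longleftrightarrow> u \<in> cube n \<and> v \<in> cube n \<and> card (symdiff u v) = 1"

definition orientation :: "nat \<Rightarrow> (nat set \<times> nat set) set \<Rightarrow> bool" where
  "orientation n D \<longleftrightarrow>
     (\<forall>(u,v)\<in>D. adjacent n u v) \<and>
     (\<forall>u v. adjacent n u v \<longrightarrow> ((u,v) \<in> D \<longleftrightarrow> (v,u) \<notin> D))"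

definition face :: "nat set \<Rightarrow> nat set \<Rightarrow> nat set set" where
  "face J v = {u. symdiff v u \<subseteq> J}"

definition sink_of :: "(nat set \<times> nat set) set \<Rightarrow> nat set set \<Rightarrow> nat set \<Rightarrow> bool" where
  "sink_of D F x \<longleftrightarrow> x \<in> F \<and> (\<forall>y\<in>F. (x,y) \<notin> D)"

definition uso :: "nat \<Rightarrow> (nat set \<times> nat set) set \<Rightarrow> bool" where
  "uso n D \<longleftrightarrow> orientation n D \<and>
     (\<forall>J v. J \<subseteq> {..<n} \<longrightarrow> v \<in> cube n \<longrightarrow> (\<exists>!x. sink_of D (face J v) x))"

definition cyclic :: "(nat set \<times> nat set) set \<Rightarrow> bool" where
  "cyclic D \<longleftrightarrow> (\<exists>v. (v,v) \<in> D\<^sup>+)"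

definition outmap :: "(nat set \<times> nat set) set \<Rightarrow> nat set \<Rightarrow> nat set" where
  "outmap D v = {j. (v, symdiff v {j}) \<in> D}"

definition global_sink :: "nat \<Rightarrow> (nat set \<times> nat set) set \<Rightarrow> nat set \<Rightarrow> bool" where
  "global_sink n D t \<longleftrightarrow> t \<in> cube n \<and> outmap D t = {}"

definition dist :: "(nat set \<times> nat set) set \<Rightarrow> nat set \<Rightarrow> nat set \<Rightarrow> enat" where
  "dist D v u = (if \<exists>k. (v,u) \<in> D ^^ k then enat (LEAST k. (v,u) \<in> D ^^ k) else \<infinity>)"

definition reachmap :: "(nat set \<times> nat set) set \<Rightarrow> nat set \<Rightarrow> nat set" where
  "reachmap D v = outmap D v \<union> {j. \<exists>u. (v,u) \<in> D\<^sup>* \<and> j \<in> outmap D u}"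

definition covered :: "(nat set \<times> nat set) set \<Rightarrow> nat \<Rightarrow> nat set \<Rightarrow> nat set \<Rightarrow> bool" where
  "covered D i v u \<longleftrightarrow> dist D v u \<le> enat i \<and> reachmap D u \<subset> reachmap D v"

definition nice :: "nat \<Rightarrow> (nat set \<times> nat set) set \<Rightarrow> nat \<Rightarrow> bool" where
  "nice n D i \<longleftrightarrow> (\<forall>v\<in>cube n. \<not> global_sink n D v \<longrightarrow> (\<exists>u\<in>cube n. covered D i v u))"

end

theory Submission
  imports Defs
begin

lemma sd_mem[simp]: "x \<in> symdiff a b \<longleftrightarrow> (x \<in> a) \<noteq> (x \<in> b)"
  by (auto simp: symdiff_def)

lemma sd_empty[simp]: "symdiff a {} = a" "symdiff {} a = a"
  by auto

lemma sd_inv[simp]: "symdiff a (symdiff a b) = b"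
  by auto

lemma sd_single_inj: "symdiff u {j} = symdiff u {k} \<Longrightarrow> j = k"
  by (auto simp: set_eq_iff)

lemma cube_iff: "u \<in> cube n \<longleftrightarrow> (\<forall>x\<in>u. x < n)"
  by (auto simp: cube_def)

definition E :: "nat \<Rightarrow> (nat set \<Rightarrow> nat set) \<Rightarrow> (nat set \<times> nat set) set" where
  "E n s = {(u, symdiff u {j}) | u j. u \<in> cube n \<and> j < n \<and> j \<in> s u}"

lemma E_mem: "(u,v) \<in> E n s \<longleftrightarrow> u \<in> cube n \<and> (\<exists>j<n. j \<in> s u \<and> v = symdiff u {j})"
  by (auto simp: E_def)

lemma E_edge: "u \<in> cube n \<Longrightarrow> j < n \<Longrightarrow> (u, symdiff u {j}) \<in> E n s \<longleftrightarrow> j \<in> s u"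
  by (auto simp: E_mem dest: sd_single_inj)

lemma sd_cube: "u \<in> cube n \<Longrightarrow> j < n \<Longrightarrow> symdiff u {j} \<in> cube n"
  by (auto simp: cube_iff)

lemma E_cube: "(u,v) \<in> E n s \<Longrightarrow> u \<in> cube n \<and> v \<in> cube n"
  by (auto simp: E_mem sd_cube)

lemma rtr_cube: "(u,v) \<in> (E n s)\<^sup>* \<Longrightarrow> u \<in> cube n \<Longrightarrow> v \<in> cube n"
  by (induction rule: rtrancl_induct) (auto dest: E_cube)

definition SW :: "nat \<Rightarrow> (nat set \<Rightarrow> nat set) \<Rightarrow> bool" where
  "SW n s \<longleftrightarrow> (\<forall>u\<in>cube n. \<forall>w\<in>cube n. u \<noteq> w \<longrightarrow> symdiff (s u) (s w) \<inter> symdiff u w \<noteq> {})"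

definition cons :: "nat \<Rightarrow> (nat set \<Rightarrow> nat set) \<Rightarrow> bool" where
  "cons n s \<longleftrightarrow> (\<forall>u\<in>cube n. s u \<subseteq> {..<n} \<and> (\<forall>j<n. j \<in> s u \<longleftrightarrow> j \<notin> s (symdiff u {j})))"

lemma reach_sink:
  assumes sw: "SW n s" and s0: "s {} = {}"
  shows "v \<in> cube n \<Longrightarrow> (v, {}) \<in> (E n s)\<^sup>*"
proof (induction "card v" arbitrary: v rule: less_induct)
  case less
  show ?case
  proof (cases "v = {}")
    case True thus ?thesis by simp
  next
    case False
    have ec: "{} \<in> cube n" by (simp add: cube_iff)
    from sw less.prems False ec have "symdiff (s v) (s {}) \<inter> symdiff v {} \<noteq> {}"
      unfolding SW_def by blast
    with s0 obtain j where j: "j \<in> s v" "j \<in> v" by auto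
    with less.prems have jn: "j < n" by (auto simp: cube_iff)
    have e: "(v, symdiff v {j}) \<in> E n s" using E_edge less.prems jn j by blast
    have fin: "finite v" using less.prems by (auto simp: cube_def intro: finite_subset)
    have "symdiff v {j} = v - {j}" using j by auto
    hence c: "card (symdiff v {j}) < card v" using j fin by (metis card_Diff1_less)
    have "(symdiff v {j}, {}) \<in> (E n s)\<^sup>*"
      using less.hyps[OF c] sd_cube[OF less.prems jn] by blast
    with e show ?thesis by (meson converse_rtrancl_into_rtrancl)
  qed
qed

lemma outmap_E: "cons n s \<Longrightarrow> u \<in> cube n \<Longrightarrow> outmap (E n s) u = s u"
  unfolding outmap_def cons_def
  by (auto simp: E_mem dest: sd_single_inj)

lemma outmap_E_out: "u \<notin> cube n \<Longrightarrow> outmap (E n s) u = {}"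
  unfolding outmap_def by (auto simp: E_mem)

lemma face_cube:
  assumes J: "J \<subseteq> {..<n}" and v: "v \<in> cube n"
  shows "face J v \<subseteq> cube n"
proof
  fix u assume "u \<in> face J v"
  hence su: "symdiff v u \<subseteq> J" by (simp add: face_def)
  show "u \<in> cube n" unfolding cube_iff
  proof
    fix x assume x: "x \<in> u"
    show "x < n"
    proof (cases "x \<in> v")
      case True thus ?thesis using v by (simp add: cube_iff)
    next
      case False hence "x \<in> symdiff v u" using x by simp
      thus ?thesis using su J by auto
    qed
  qed
qed

lemma sink_iff:
  assumes c: "cons n s" and J: "J \<subseteq> {..<n}" and v: "v \<in> cube n"
  shows "sink_of (E n s) (face J v) x \<longleftrightarrow> x \<in> face J v \<and> s x \<inter> J = {}"
proof
  assume a: "sink_of (E n s) (face J v) x"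
  hence xf: "x \<in> face J v" by (simp add: sink_of_def)
  hence xc: "x \<in> cube n" using face_cube J v by blast
  have "j \<notin> s x" if jJ: "j \<in> J" for j
  proof
    assume js: "j \<in> s x"
    have jn: "j < n" using J jJ by auto
    have e: "(x, symdiff x {j}) \<in> E n s" using E_edge xc jn js by blast
    have "symdiff x {j} \<in> face J v" using xf jJ unfolding face_def by (auto simp: subset_iff)
    with a e show False by (auto simp: sink_of_def)
  qed
  with xf show "x \<in> face J v \<and> s x \<inter> J = {}" by blast
next
  assume a: "x \<in> face J v \<and> s x \<inter> J = {}"
  have "(x,y) \<notin> E n s" if y: "y \<in> face J v" for y
  proof
    assume "(x,y) \<in> E n s"
    then obtain j where j: "j < n" "j \<in> s x" "y = symdiff x {j}" by (auto simp: E_mem)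
    with a have "j \<notin> J" by blast
    with a y j show False unfolding face_def by (auto simp: subset_iff)
  qed
  with a show "sink_of (E n s) (face J v) x" by (auto simp: sink_of_def)
qed

lemma card_face:
  assumes J: "J \<subseteq> {..<n}"
  shows "face J v = symdiff v ` Pow J" "card (face J v) = card (Pow J)"
proof -
  show f: "face J v = symdiff v ` Pow J"
  proof
    show "face J v \<subseteq> symdiff v ` Pow J"
    proof
      fix x assume "x \<in> face J v"
      hence "symdiff v x \<in> Pow J" by (simp add: face_def)
      moreover have "x = symdiff v (symdiff v x)" by simp
      ultimately show "x \<in> symdiff v ` Pow J" by blast
    qed
    show "symdiff v ` Pow J \<subseteq> face J v" by (auto simp: face_def)
  qed
  have "inj_on (symdiff v) (Pow J)" by (metis inj_onI sd_inv)
  thus "card (face J v) = card (Pow J)" using f by (simp add: card_image)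
qed

lemma uso_E:
  assumes c: "cons n s" and sw: "SW n s"
  shows "uso n (E n s)"
  unfolding uso_def
proof (intro conjI allI impI)
  show "orientation n (E n s)"
    unfolding orientation_def
  proof (intro conjI allI impI ballI)
    fix p assume "p \<in> E n s"
    then obtain u j where p: "p = (u, symdiff u {j})" "u \<in> cube n" "j < n"
      by (auto simp: E_def)
    thus "case p of (u, v) \<Rightarrow> adjacent n u v"
      by (simp add: adjacent_def sd_cube)
  next
    fix u v assume adj: "adjacent n u v"
    have "card (symdiff u v) = 1" using adj by (simp add: adjacent_def)
    then obtain j where j: "symdiff u v = {j}" using card_1_singletonE by blast
    have uc: "u \<in> cube n" and vc: "v \<in> cube n" using adj by (auto simp: adjacent_def)
    have "j \<in> symdiff u v" using j by simp
    hence jn: "j < n" using uc vc by (auto simp: cube_iff)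
    have v: "v = symdiff u {j}" using j by (metis sd_inv)
    have u: "u = symdiff v {j}" using v by auto
    have "(u,v) \<in> E n s \<longleftrightarrow> j \<in> s u" using E_edge uc jn v by blast
    moreover have "(v,u) \<in> E n s \<longleftrightarrow> j \<in> s v" using E_edge vc jn u by blast
    moreover have "j \<in> s u \<longleftrightarrow> j \<notin> s v" using c uc jn v unfolding cons_def by blast
    ultimately show "(u, v) \<in> E n s \<longleftrightarrow> (v, u) \<notin> E n s" by blast
  qed
next
  fix J v assume J: "J \<subseteq> {..<n}" and v: "v \<in> cube n"
  let ?F = "face J v"
  have Fc: "?F \<subseteq> cube n" using face_cube J v by blast
  have finJ: "finite J" using J finite_subset by blast
  have finF: "finite ?F" using card_face[OF J] finJ by simp
  have inj: "inj_on (\<lambda>x. s x \<inter> J) ?F"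
  proof (rule inj_onI)
    fix x w assume x: "x \<in> ?F" and w: "w \<in> ?F" and eq: "s x \<inter> J = s w \<inter> J"
    show "x = w"
    proof (rule ccontr)
      assume "x \<noteq> w"
      with sw x w Fc obtain k where k: "k \<in> symdiff (s x) (s w)" "k \<in> symdiff x w"
        unfolding SW_def by blast
      have "k \<in> J" using k(2) x w unfolding face_def by (auto simp: subset_iff)
      with k(1) eq show False by auto
    qed
  qed
  have sub: "(\<lambda>x. s x \<inter> J) ` ?F \<subseteq> Pow J" by auto
  have "card ((\<lambda>x. s x \<inter> J) ` ?F) = card (Pow J)"
    using inj card_face[OF J] by (simp add: card_image)
  hence "(\<lambda>x. s x \<inter> J) ` ?F = Pow J"
    using sub finJ by (simp add: card_subset_eq)
  then obtain x where x: "x \<in> ?F" "s x \<inter> J = {}" by (metis (no_types, lifting) Pow_bottom imageE)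
  have ex: "sink_of (E n s) ?F x" using sink_iff[OF c J v] x by blast
  have un: "y = x" if "sink_of (E n s) ?F y" for y
  proof -
    have "y \<in> ?F" "s y \<inter> J = {}" using sink_iff[OF c J v] that by auto
    with x inj show ?thesis by (metis inj_onD)
  qed
  show "\<exists>!x. sink_of (E n s) ?F x" using ex un by blast
qed

definition gg :: "(nat set \<Rightarrow> nat set) \<Rightarrow> nat set \<Rightarrow> nat set" where
  "gg s y = symdiff y (s y)"

definition ext :: "nat \<Rightarrow> (nat set \<Rightarrow> nat set) \<Rightarrow> nat set \<Rightarrow> nat set" where
  "ext n s x = (if n \<in> x then symdiff (s (x - {n})) {0} \<union> (if 0 \<in> gg s (x - {n}) then {} else {n})
                else s x \<union> (if 0 \<in> gg s x then {n} else {}))"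

lemma cube_notin: "x \<in> cube n \<Longrightarrow> n \<notin> x"
  by (auto simp: cube_iff)

lemma ext_low: "x \<in> cube n \<Longrightarrow> ext n s x = s x \<union> (if 0 \<in> gg s x then {n} else {})"
  by (simp add: ext_def cube_notin)

lemma ext_up: "x \<in> cube n \<Longrightarrow> ext n s (insert n x) = symdiff (s x) {0} \<union> (if 0 \<in> gg s x then {} else {n})"
  using cube_notin[of x n] by (simp add: ext_def)

lemma cube_Suc_cases:
  assumes "z \<in> cube (Suc n)"
  obtains "z \<in> cube n" | x where "x \<in> cube n" "z = insert n x"
proof (cases "n \<in> z")
  case True
  hence "z - {n} \<in> cube n" "z = insert n (z - {n})" using assms by (auto simp: cube_iff)
  thus ?thesis using that by blast
next
  case False
  hence "z \<in> cube n" using assms by (auto simp: cube_iff less_Suc_eq)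
  thus ?thesis using that by blast
qed

lemma cube_mono: "x \<in> cube n \<Longrightarrow> x \<in> cube (Suc n)"
  by (auto simp: cube_iff)

lemma cube_ins: "x \<in> cube n \<Longrightarrow> insert n x \<in> cube (Suc n)"
  by (auto simp: cube_iff)

lemma cons_ext:
  assumes c: "cons n s" and n0: "0 < n"
  shows "cons (Suc n) (ext n s)"
  unfolding cons_def
proof (intro ballI conjI allI impI)
  fix z assume z: "z \<in> cube (Suc n)"
  show "ext n s z \<subseteq> {..<Suc n}"
    using z
  proof (cases rule: cube_Suc_cases)
    case 1
    have "s z \<subseteq> {..<n}" using c 1 by (simp add: cons_def)
    thus ?thesis using 1 n0 by (auto simp: ext_low)
  next
    case (2 x)
    have "s x \<subseteq> {..<n}" using c 2 by (simp add: cons_def)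
    thus ?thesis using 2 n0 by (auto simp: ext_up)
  qed
  fix j assume j: "j < Suc n"
  show "j \<in> ext n s z \<longleftrightarrow> j \<notin> ext n s (symdiff z {j})"
    using z
  proof (cases rule: cube_Suc_cases)
    case 1
    show ?thesis
    proof (cases "j = n")
      case True
      hence "symdiff z {j} = insert n z" using 1 cube_notin by auto
      moreover have "s z \<subseteq> {..<n}" using c 1 by (simp add: cons_def)
      ultimately show ?thesis using True 1 n0 by (auto simp: ext_low ext_up)
    next
      case False
      hence jn: "j < n" using j by simp
      have sc: "symdiff z {j} \<in> cube n" using sd_cube 1 jn by blast
      have "j \<in> s z \<longleftrightarrow> j \<notin> s (symdiff z {j})" using c 1 jn by (simp add: cons_def)
      thus ?thesis using 1 sc False by (simp add: ext_low)
    qed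
  next
    case (2 x)
    show ?thesis
    proof (cases "j = n")
      case True
      hence "symdiff z {j} = x" using 2 cube_notin by auto
      moreover have "s x \<subseteq> {..<n}" using c 2 by (simp add: cons_def)
      ultimately show ?thesis using True 2 n0 by (auto simp: ext_low ext_up)
    next
      case False
      hence jn: "j < n" using j by simp
      have sc: "symdiff x {j} \<in> cube n" using sd_cube 2 jn by blast
      have eq: "symdiff z {j} = insert n (symdiff x {j})" using 2 False by auto
      have "j \<in> s x \<longleftrightarrow> j \<notin> s (symdiff x {j})" using c 2 jn by (simp add: cons_def)
      thus ?thesis using 2 sc False eq by (auto simp: ext_up)
    qed
  qed
qed

lemma SW_cross:
  assumes sw: "SW n s" and c: "cons n s" and n0: "0 < n" and a: "a \<in> cube n" and b: "b \<in> cube n"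
  shows "symdiff (ext n s a) (ext n s (insert n b)) \<inter> symdiff a (insert n b) \<noteq> {}"
proof (cases "(0 \<in> gg s a) = (0 \<in> gg s b)")
  case True
  have "n \<notin> s a" "n \<notin> s b" using c a b unfolding cons_def by auto
  have "n \<in> symdiff (ext n s a) (ext n s (insert n b))"
    using True a b n0 \<open>n \<notin> s a\<close> \<open>n \<notin> s b\<close> by (auto simp: ext_low ext_up)
  moreover have "n \<in> symdiff a (insert n b)" using a cube_notin by auto
  ultimately show ?thesis by blast
next
  case False
  hence ab: "a \<noteq> b" by blast
  with sw a b obtain k where k: "k \<in> symdiff (s a) (s b)" "k \<in> symdiff a b" unfolding SW_def by blast
  have kn: "k < n" using k(2) a b by (auto simp: cube_iff)
  show ?thesis
  proof (cases "k = 0")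
    case True
    with k False show ?thesis by (auto simp: gg_def)
  next
    case k0: False
    have "k \<in> symdiff (ext n s a) (ext n s (insert n b))"
      using k(1) k0 kn a b by (auto simp: ext_low ext_up)
    moreover have "k \<in> symdiff a (insert n b)" using k(2) kn by auto
    ultimately show ?thesis by blast
  qed
qed

lemma sd_comm: "symdiff a b = symdiff b a" by auto

lemma SW_ext:
  assumes sw: "SW n s" and c: "cons n s" and n0: "0 < n"
  shows "SW (Suc n) (ext n s)"
  unfolding SW_def
proof (intro ballI impI)
  fix u w assume u: "u \<in> cube (Suc n)" and w: "w \<in> cube (Suc n)" and uw: "u \<noteq> w"
  show "symdiff (ext n s u) (ext n s w) \<inter> symdiff u w \<noteq> {}"
    using u
  proof (cases rule: cube_Suc_cases)
    case 1
    note u1 = 1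
    show ?thesis using w
    proof (cases rule: cube_Suc_cases)
      case 1
      note w1 = 1
      with sw u1 uw obtain k where k: "k \<in> symdiff (s u) (s w)" "k \<in> symdiff u w" unfolding SW_def by blast
      have kn: "k < n" using k(2) u1 w1 by (auto simp: cube_iff)
      have "k \<in> symdiff (ext n s u) (ext n s w)" using k(1) kn u1 w1 by (auto simp: ext_low)
      with k(2) show ?thesis by blast
    next
      case (2 b) thus ?thesis using SW_cross[OF sw c n0 u1 2(1)] by simp
    qed
  next
    case (2 a)
    note u2 = 2
    show ?thesis using w
    proof (cases rule: cube_Suc_cases)
      case 1
      thus ?thesis using SW_cross[OF sw c n0 1 u2(1)] u2 by (simp add: sd_comm)
    next
      case (2 b)
      note w2 = 2
      with u2 uw have ab: "a \<noteq> b" by blast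
      with sw u2 w2 obtain k where k: "k \<in> symdiff (s a) (s b)" "k \<in> symdiff a b" unfolding SW_def by blast
      have kn: "k < n" using k(2) u2 w2 by (auto simp: cube_iff)
      have "k \<in> symdiff (ext n s u) (ext n s w)" using k(1) kn u2 w2 by (auto simp: ext_up)
      moreover have "k \<in> symdiff u w" using k(2) kn u2 w2 by auto
      ultimately show ?thesis by blast
    qed
  qed
qed

definition FF :: "nat \<Rightarrow> (nat set \<Rightarrow> nat set) \<Rightarrow> bool" where
  "FF n s \<longleftrightarrow> (\<forall>z\<in>cube n. z \<noteq> {} \<longrightarrow> (\<forall>k<n. \<exists>y. (z,y) \<in> (E n s)\<^sup>* \<and> k \<in> s y))"

definition UU :: "nat \<Rightarrow> (nat set \<Rightarrow> nat set) \<Rightarrow> bool" where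
  "UU n s \<longleftrightarrow> (\<forall>z\<in>cube n. z \<noteq> {} \<longrightarrow> (\<exists>y. (z,y) \<in> (E n s)\<^sup>* \<and> 0 \<in> gg s y))"

definition Inv :: "nat \<Rightarrow> (nat set \<Rightarrow> nat set) \<Rightarrow> bool" where
  "Inv n s \<longleftrightarrow> 0 < n \<and> cons n s \<and> SW n s \<and> s {} = {} \<and> cyclic (E n s) \<and> FF n s \<and> UU n s"

lemma ext_empty: "s {} = {} \<Longrightarrow> ext n s {} = {}"
  by (simp add: ext_def gg_def)

lemma E_lift: "E n s \<subseteq> E (Suc n) (ext n s)"
proof
  fix p assume "p \<in> E n s"
  then obtain u j where p: "p = (u, symdiff u {j})" "u \<in> cube n" "j < n" "j \<in> s u"
    by (auto simp: E_def)
  have "j \<in> ext n s u" using p by (simp add: ext_low)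
  thus "p \<in> E (Suc n) (ext n s)" using p E_edge[of u "Suc n" j] cube_mono by simp
qed

lemma rtr_lift: "(u,v) \<in> (E n s)\<^sup>* \<Longrightarrow> (u,v) \<in> (E (Suc n) (ext n s))\<^sup>*"
  using rtrancl_mono[OF E_lift] by blast

lemma E_up: "x \<in> cube n \<Longrightarrow> 0 \<in> gg s x \<Longrightarrow> (x, insert n x) \<in> E (Suc n) (ext n s)"
proof -
  assume x: "x \<in> cube n" and g: "0 \<in> gg s x"
  have "n \<in> ext n s x" using x g by (simp add: ext_low)
  moreover have "symdiff x {n} = insert n x" using cube_notin[OF x] by auto
  ultimately show ?thesis using E_edge[of x "Suc n" n] cube_mono[OF x] by simp
qed

lemma E_down: "x \<in> cube n \<Longrightarrow> 0 \<notin> gg s x \<Longrightarrow> (insert n x, x) \<in> E (Suc n) (ext n s)"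
proof -
  assume x: "x \<in> cube n" and g: "0 \<notin> gg s x"
  have "n \<in> ext n s (insert n x)" using x g by (simp add: ext_up)
  moreover have "symdiff (insert n x) {n} = x" using cube_notin[OF x] by auto
  ultimately show ?thesis using E_edge[of "insert n x" "Suc n" n] cube_ins[OF x] by simp
qed

lemma to_lower:
  assumes sw: "SW n s" and c: "cons n s" and n0: "0 < n" and s0: "s {} = {}"
    and z: "z \<in> cube (Suc n)" and zne: "z \<noteq> {}"
  shows "\<exists>x\<in>cube n. x \<noteq> {} \<and> (z,x) \<in> (E (Suc n) (ext n s))\<^sup>*"
proof -
  let ?E = "E (Suc n) (ext n s)"
  have sw': "SW (Suc n) (ext n s)" using SW_ext[OF sw c n0] .
  have r: "(z,{}) \<in> ?E\<^sup>*" using reach_sink[OF sw' ext_empty[of s n, OF s0] z] .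
  have c0: "{0} \<in> cube n" using n0 by (simp add: cube_iff)
  have s0': "0 \<in> s {0}"
  proof -
    have "symdiff (s {0}) (s {}) \<inter> symdiff {0} {} \<noteq> {}"
      using sw c0 unfolding SW_def by (metis cube_iff empty_iff insert_not_empty)
    thus ?thesis using s0 by auto
  qed
  have key: "(\<exists>x\<in>cube n. x \<noteq> {} \<and> ({n},x) \<in> ?E\<^sup>*)"
  proof -
    have e1: "({n}, symdiff {n} {0}) \<in> ?E"
    proof -
      have "{n} = insert n {}" by simp
      hence "0 \<in> ext n s {n}" using ext_up[of "{}" n s] s0 by (simp add: cube_iff)
      moreover have "{n} \<in> cube (Suc n)" by (simp add: cube_iff)
      ultimately show ?thesis using E_edge[of "{n}" "Suc n" 0] by simp
    qed
    have eq: "symdiff {n} {0} = insert n {0}" using n0 by auto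
    have e2: "(insert n {0}, {0}) \<in> ?E" using E_down[OF c0] s0' by (simp add: gg_def)
    have "({n},{0}) \<in> ?E\<^sup>*" using e1 e2 eq by (metis converse_rtrancl_into_rtrancl r_into_rtrancl)
    thus ?thesis using c0 by blast
  qed
  have "z \<in> cube (Suc n) \<Longrightarrow> z \<noteq> {} \<Longrightarrow> \<exists>x\<in>cube n. x \<noteq> {} \<and> (z,x) \<in> ?E\<^sup>*"
    using r
  proof (induction rule: converse_rtrancl_induct)
    case base thus ?case by simp
  next
    case (step y y')
    show ?case
    proof (cases "n \<in> y")
      case False
      hence "y \<in> cube n" using step.prems by (auto simp: cube_iff less_Suc_eq)
      thus ?thesis using step.prems by blast
    next
      case True
      show ?thesis
      proof (cases "y' = {}")
        case False
        have "y' \<in> cube (Suc n)" using E_cube[OF step.hyps(1)] by blast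
        then obtain x where "x \<in> cube n" "x \<noteq> {}" "(y',x) \<in> ?E\<^sup>*" using step.IH False by blast
        thus ?thesis using step.hyps(1) by (meson converse_rtrancl_into_rtrancl)
      next
        case y'0: True
        obtain j where "y' = symdiff y {j}" using step.hyps(1) by (auto simp: E_mem)
        with y'0 have "y = {j}" by (metis sd_inv sd_empty(1))
        with True have "y = {n}" by auto
        thus ?thesis using key by simp
      qed
    qed
  qed
  thus ?thesis using z zne by blast
qed

lemma Inv_ext:
  assumes I: "Inv n s"
  shows "Inv (Suc n) (ext n s)"
proof -
  have n0: "0 < n" and c: "cons n s" and sw: "SW n s" and s0: "s {} = {}"
    and cy: "cyclic (E n s)" and F: "FF n s" and U: "UU n s"
    using I by (auto simp: Inv_def)
  let ?E = "E (Suc n) (ext n s)"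
  have F': "FF (Suc n) (ext n s)"
    unfolding FF_def
  proof (intro ballI impI allI)
    fix z k assume z: "z \<in> cube (Suc n)" and zne: "z \<noteq> {}" and k: "k < Suc n"
    obtain x where x: "x \<in> cube n" "x \<noteq> {}" "(z,x) \<in> ?E\<^sup>*" using to_lower[OF sw c n0 s0 z zne] by blast
    show "\<exists>y. (z, y) \<in> ?E\<^sup>* \<and> k \<in> ext n s y"
    proof (cases "k = n")
      case False
      hence kn: "k < n" using k by simp
      then obtain y where y: "(x,y) \<in> (E n s)\<^sup>*" "k \<in> s y" using F x unfolding FF_def by blast
      have yc: "y \<in> cube n" using rtr_cube y(1) x(1) by blast
      have "k \<in> ext n s y" using y yc by (simp add: ext_low)
      moreover have "(z,y) \<in> ?E\<^sup>*" using x(3) rtr_lift[OF y(1)] by (meson rtrancl_trans)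
      ultimately show ?thesis by blast
    next
      case True
      obtain y where y: "(x,y) \<in> (E n s)\<^sup>*" "0 \<in> gg s y" using U x unfolding UU_def by blast
      have yc: "y \<in> cube n" using rtr_cube y(1) x(1) by blast
      have "k \<in> ext n s y" using y yc True by (simp add: ext_low)
      moreover have "(z,y) \<in> ?E\<^sup>*" using x(3) rtr_lift[OF y(1)] by (meson rtrancl_trans)
      ultimately show ?thesis by blast
    qed
  qed
  have U': "UU (Suc n) (ext n s)"
    unfolding UU_def
  proof (intro ballI impI)
    fix z assume z: "z \<in> cube (Suc n)" and zne: "z \<noteq> {}"
    obtain x where x: "x \<in> cube n" "x \<noteq> {}" "(z,x) \<in> ?E\<^sup>*" using to_lower[OF sw c n0 s0 z zne] by blast
    obtain y where y: "(x,y) \<in> (E n s)\<^sup>*" "0 \<in> gg s y" using U x unfolding UU_def by blast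
    have yc: "y \<in> cube n" using rtr_cube y(1) x(1) by blast
    have "0 \<in> gg (ext n s) y" using y yc n0 by (auto simp: ext_low gg_def)
    moreover have "(z,y) \<in> ?E\<^sup>*" using x(3) rtr_lift[OF y(1)] by (meson rtrancl_trans)
    ultimately show "\<exists>y. (z, y) \<in> ?E\<^sup>* \<and> 0 \<in> gg (ext n s) y" by blast
  qed
  have cy': "cyclic ?E" using cy trancl_mono[OF _ E_lift] unfolding cyclic_def by blast
  show ?thesis unfolding Inv_def
    using n0 cons_ext[OF c n0] SW_ext[OF sw c n0] ext_empty[of s n, OF s0] cy' F' U' by simp
qed


definition s3 :: "nat set \<Rightarrow> nat set" where
  "s3 x = {j. j < 3 \<and> ((j \<in> x) \<noteq> (((j+1) mod 3 \<in> x) \<and> ((j+2) mod 3 \<notin> x)))}"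

lemma cube3: "cube 3 = {{},{0},{1},{0,1},{2},{0,2},{1,2},{0,1,2}}"
proof -
  have "{..<3::nat} = {0,1,2}" by auto
  thus ?thesis by (simp add: cube_def Pow_insert insert_commute)
qed

lemma all3: "(\<forall>j<(3::nat). P j) \<longleftrightarrow> P 0 \<and> P 1 \<and> P 2"
  by (auto simp: numeral_3_eq_3 numeral_2_eq_2 less_Suc_eq)

lemma ne3: "(\<exists>k\<in>{0,1,2::nat}. k \<in> A \<and> k \<in> B) \<Longrightarrow> A \<inter> B \<noteq> {}"
  by auto

lemma edge_intro: "u \<in> cube n \<Longrightarrow> j < n \<Longrightarrow> j \<in> s u \<Longrightarrow> v = symdiff u {j} \<Longrightarrow> (u,v) \<in> E n s"
  by (auto simp: E_mem)

lemma cons3: "cons 3 s3"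
  unfolding cons_def cube3 all3 by (auto simp: s3_def)

lemma SW3: "SW 3 s3"
proof -
  have "\<forall>u\<in>cube 3. \<forall>w\<in>cube 3. u = w \<or> (\<exists>k\<in>{0,1,2::nat}. k \<in> symdiff (s3 u) (s3 w) \<and> k \<in> symdiff u w)"
    unfolding cube3 by (simp add: s3_def)
  thus ?thesis unfolding SW_def using ne3 by blast
qed

lemma Inv3: "Inv 3 s3"
proof -
  let ?E = "E 3 s3"
  have c: "\<And>x. x \<in> cube 3 \<longleftrightarrow> x \<in> {{},{0},{1},{0,1},{2},{0,2},{1,2},{0,1,2}}" by (simp add: cube3)
  have e1: "({0},{0,2}) \<in> ?E" by (rule edge_intro[where j=2]) (auto simp: c s3_def)
  have e2: "({0,2},{2}) \<in> ?E" by (rule edge_intro[where j=0]) (auto simp: c s3_def)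
  have e3: "({2},{1,2}) \<in> ?E" by (rule edge_intro[where j=1]) (auto simp: c s3_def)
  have e4: "({1,2},{1}) \<in> ?E" by (rule edge_intro[where j=2]) (auto simp: c s3_def)
  have e5: "({1},{0,1}) \<in> ?E" by (rule edge_intro[where j=0]) (auto simp: c s3_def)
  have e6: "({0,1},{0}) \<in> ?E" by (rule edge_intro[where j=1]) (auto simp: c s3_def)
  have e7: "({0,1,2},{1,2}) \<in> ?E" by (rule edge_intro[where j=0]) (auto simp: c s3_def)
  have cyc: "({0},{0}) \<in> ?E\<^sup>+" using e1 e2 e3 e4 e5 e6
    by (meson trancl.r_into_trancl trancl_into_trancl)
  have r: "\<forall>z\<in>cube 3. z \<noteq> {} \<longrightarrow> (z,{0}) \<in> ?E\<^sup>* \<and> (z,{1}) \<in> ?E\<^sup>*"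
    unfolding cube3 using e1 e2 e3 e4 e5 e6 e7
    by (simp; meson converse_rtrancl_into_rtrancl rtrancl.rtrancl_refl)
  have s30: "s3 {} = {}" by (auto simp: s3_def)
  have F: "FF 3 s3" unfolding FF_def all3
  proof (intro ballI impI conjI)
    fix z assume z: "z \<in> cube 3" "z \<noteq> {}"
    show "\<exists>y. (z, y) \<in> ?E\<^sup>* \<and> 0 \<in> s3 y" using r z by (intro exI[of _ "{0}"]) (auto simp: s3_def)
    show "\<exists>y. (z, y) \<in> ?E\<^sup>* \<and> 1 \<in> s3 y" using r z by (intro exI[of _ "{1}"]) (auto simp: s3_def)
    show "\<exists>y. (z, y) \<in> ?E\<^sup>* \<and> 2 \<in> s3 y" using r z by (intro exI[of _ "{0}"]) (auto simp: s3_def)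
  qed
  have U: "UU 3 s3" unfolding UU_def
  proof (intro ballI impI)
    fix z assume z: "z \<in> cube 3" "z \<noteq> {}"
    show "\<exists>y. (z, y) \<in> ?E\<^sup>* \<and> 0 \<in> gg s3 y" using r z by (intro exI[of _ "{1}"]) (auto simp: s3_def gg_def)
  qed
  show ?thesis unfolding Inv_def cyclic_def using cons3 SW3 s30 cyc F U by auto
qed

primrec SS :: "nat \<Rightarrow> nat set \<Rightarrow> nat set" where
  "SS 0 = s3"
| "SS (Suc k) = ext (k+3) (SS k)"

lemma Inv_SS: "Inv (k+3) (SS k)"
proof (induction k)
  case 0 thus ?case using Inv3 by simp
next
  case (Suc k) thus ?case using Inv_ext[OF Suc] by simp
qed

lemma reachmap_full:
  assumes I: "Inv n s" and z: "z \<in> cube n" "z \<noteq> {}"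
  shows "reachmap (E n s) z = {..<n}"
proof -
  have c: "cons n s" and F: "FF n s" using I by (auto simp: Inv_def)
  have sub: "s y \<subseteq> {..<n}" if "y \<in> cube n" for y using c that by (simp add: cons_def)
  show ?thesis
  proof
    show "reachmap (E n s) z \<subseteq> {..<n}"
    proof
      fix k assume "k \<in> reachmap (E n s) z"
      then obtain y where y: "(z,y) \<in> (E n s)\<^sup>*" "k \<in> outmap (E n s) y"
        unfolding reachmap_def by blast
      have yc: "y \<in> cube n" using rtr_cube y(1) z(1) by blast
      show "k \<in> {..<n}" using y(2) outmap_E[OF c yc] sub[OF yc] by blast
    qed
    show "{..<n} \<subseteq> reachmap (E n s) z"
    proof
      fix k assume "k \<in> {..<n}"
      then obtain y where y: "(z,y) \<in> (E n s)\<^sup>*" "k \<in> s y" using F z unfolding FF_def by blast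
      have "y \<in> cube n" using rtr_cube y z by blast
      thus "k \<in> reachmap (E n s) z" using y outmap_E[OF c] unfolding reachmap_def by auto
    qed
  qed
qed

lemma hamming:
  "(v,u) \<in> (E n s)^^k \<Longrightarrow> v \<in> cube n \<Longrightarrow> card (symdiff v u) \<le> k"
proof (induction k arbitrary: u)
  case 0
  hence "u = v" by simp
  moreover have "symdiff v v = {}" by auto
  ultimately show ?case by simp
next
  case (Suc k)
  then obtain w where w: "(v,w) \<in> (E n s)^^k" "(w,u) \<in> E n s" by auto
  then obtain j where u: "u = symdiff w {j}" by (auto simp: E_mem)
  have fin: "finite (symdiff v w)"
  proof -
    have "v \<in> cube n" "w \<in> cube n" using Suc.prems w(2) E_cube by auto
    hence "symdiff v w \<subseteq> {..<n}" by (auto simp: cube_iff)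
    thus ?thesis using finite_subset by blast
  qed
  have "symdiff v u \<subseteq> insert j (symdiff v w)" using u by auto
  hence "card (symdiff v u) \<le> card (insert j (symdiff v w))" using fin by (simp add: card_mono)
  also have "\<dots> \<le> Suc (card (symdiff v w))" by (simp add: card_insert_le_m1)
  also have "\<dots> \<le> Suc k" using Suc.IH[OF w(1) Suc.prems(2)] by simp
  finally show ?case .
qed

theorem theorem12:
  fixes n :: nat
  assumes "n \<ge> 3"
  shows "\<exists>D. uso n D \<and> cyclic D \<and> (\<forall>i<n. \<not> nice n D i)"
proof -
  define s where "s = SS (n-3)"
  have I: "Inv n s" using Inv_SS[of "n-3"] assms unfolding s_def by simp
  have c: "cons n s" and sw: "SW n s" and s0: "s {} = {}" and cy: "cyclic (E n s)" and n0: "0 < n"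
    using I by (auto simp: Inv_def)
  let ?D = "E n s"
  have notnice: "\<not> nice n ?D i" if i: "i < n" for i
  proof
    assume nice: "nice n ?D i"
    let ?v = "{..<n}"
    have vc: "?v \<in> cube n" by (simp add: cube_def)
    have vne: "?v \<noteq> {}" using n0 by auto
    have "symdiff (s ?v) (s {}) \<inter> symdiff ?v {} \<noteq> {}"
      using sw vc vne unfolding SW_def by (metis cube_iff empty_iff)
    hence "s ?v \<noteq> {}" using s0 by auto
    hence ns: "\<not> global_sink n ?D ?v" using outmap_E[OF c vc] by (simp add: global_sink_def)
    then obtain u where u: "u \<in> cube n" "covered ?D i ?v u" using nice vc unfolding nice_def by blast
    have d: "dist ?D ?v u \<le> enat i" using u(2) by (simp add: covered_def)
    have "\<exists>k. (?v,u) \<in> ?D^^k" 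
    proof (rule ccontr)
      assume "\<not> ?thesis" thus False using d by (simp add: dist_def)
    qed
    hence ex: "\<exists>k. (?v,u) \<in> ?D^^k" .
    let ?k = "LEAST k. (?v,u) \<in> ?D^^k"
    have k1: "(?v,u) \<in> ?D^^?k" using LeastI_ex[OF ex] .
    have k2: "?k \<le> i" using d ex by (simp add: dist_def)
    have une: "u \<noteq> {}"
    proof
      assume "u = {}"
      hence "card (symdiff ?v u) = n" by simp
      thus False using hamming[OF k1 vc] k2 i by simp
    qed
    have "reachmap ?D u = reachmap ?D ?v"
      using reachmap_full[OF I u(1) une] reachmap_full[OF I vc vne] by simp
    thus False using u(2) by (simp add: covered_def)
  qed
  show ?thesis using uso_E[OF c sw] cy notnice by blast
qed

end
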